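(* For every integer $N\ge1$, with $\omega=e^{2\pi i/N}$, $$0\le\sum_{k=0}^{N-1}\dim\mathbb J^{(1)}_\gamma(\omega^k)\le2\dim(M).$$
   Context: Let $(M,g)$ be a semi-Riemannian manifold of dimension $n$ and $\gamma:[0,1]\to M$ an orientation preserving closed geodesic, extended $1$-periodically. Fix a smooth $1$-periodic family of isomorphisms $T_t:\mathbb R^n\to T_{\gamma(t)}M$ with $g(T_te_i,T_te_j)=\epsilon_i\delta_{ij}$, $\epsilon_i\in\{\pm1\}$. Let $\overline R_t=T_t^{-1}\circ R(\dot\gamma(t),T_t\,\cdot\,)\dot\gamma(t)$ (curvature $R(X,Y)=[\nabla_X,\nabla_Y]-\nabla_{[X,Y]}$) and $\Gamma_t$ defined by $T_t^{-1}\tfrac{D}{dt}\big(T_t\overline V(t)\big)=\overline V'(t)+\Gamma_t\overline V(t)$, extended $\mathbb C$-linearly to $\mathbb C^n$. The Jacobi equation (J) is $V''+2\Gamma_rV'+(\Gamma_r'+\Gamma_r^2-\overline R_r)V=0$ for $V:[0,1]\to\mathbb C^n$. For $z\in\mathbb S^1$, $\mathbb J^{(1)}_\gamma(z)=\{V\ \text{solution of (J)}:V(0)=V(1)=0,\ V'(1)=zV'(0)\}$ (complex vector space). *)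

theory Defs
  imports "HOL-Analysis.Analysis" "HOL-Library.Function_Algebras"
begin

text \<open>The Jacobi equation along a closed geodesic, written in a 1-periodic
parallel-type frame T_t, only involves the real n x n matrix functions
Gamma_t and Rbar_t.  We work with these coefficient functions directly.\<close>

definition cmat :: "real^'n^'m \<Rightarrow> complex^'n^'m" where
  "cmat A = (\<chi> i j. complex_of_real (A $ i $ j))"

text \<open>Diagonal signature matrix diag(eps_1,...,eps_n) of the metric in the frame.\<close>
definition sig_mat :: "real^'n \<Rightarrow> real^'n^'n" where
  "sig_mat \<epsilon> = (\<chi> i j. if i = j then \<epsilon> $ i else 0)"

text \<open>Solutions V : [0,1] -> C^n of the Jacobi equation
  V'' + 2 Gamma V' + (Gamma' + Gamma^2 - Rbar) V = 0.
  A function on [0,1] is represented extensionally: it vanishes outside [0,1].\<close>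
definition jacobi_solution ::
  "(real \<Rightarrow> real^'n^'n) \<Rightarrow> (real \<Rightarrow> real^'n^'n) \<Rightarrow> (real \<Rightarrow> complex^'n) \<Rightarrow> bool" where
  "jacobi_solution \<Gamma> R V \<longleftrightarrow>
     (\<forall>t. t \<notin> {0..1} \<longrightarrow> V t = 0) \<and>
     (\<exists>V1 V2. \<forall>t\<in>{0..1}.
        (V has_vector_derivative V1 t) (at t within {0..1}) \<and>
        (V1 has_vector_derivative V2 t) (at t within {0..1}) \<and>
        V2 t + (2::complex) *s (cmat (\<Gamma> t) *v V1 t)
          + cmat (vector_derivative \<Gamma> (at t) + \<Gamma> t ** \<Gamma> t - R t) *v V t = 0)"

definition J1 ::
  "(real \<Rightarrow> real^'n^'n) \<Rightarrow> (real \<Rightarrow> real^'n^'n) \<Rightarrow> complex \<Rightarrow> (real \<Rightarrow> complex^'n) set" where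
  "J1 \<Gamma> R z = {V. jacobi_solution \<Gamma> R V \<and> V 0 = 0 \<and> V 1 = 0 \<and>
      vector_derivative V (at 1 within {0..1}) = z *s vector_derivative V (at 0 within {0..1})}"

definition cdim :: "(real \<Rightarrow> complex^'n) set \<Rightarrow> nat" where
  "cdim S = vector_space.dim (\<lambda>(c::complex) (V::real \<Rightarrow> complex^'n) t. c *s V t) S"

end

theory Submission
  imports Defs
begin

lemma scal2: "(2::complex) *s (y::complex^'n) = 2 *\<^sub>R y"
  by (simp add: vec_eq_iff scaleR_conv_of_real)

lemma ode_unique:
  fixes V V1 V2 :: "real \<Rightarrow> complex^'n" and A B :: "real \<Rightarrow> complex^'n^'n"
  assumes D: "\<forall>t\<in>{0..1}. (V has_vector_derivative V1 t) (at t within {0..1}) \<and>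
      (V1 has_vector_derivative V2 t) (at t within {0..1}) \<and>
      V2 t + (2::complex) *s (A t *v V1 t) + B t *v V t = 0"
    and KA: "\<forall>t\<in>{0..1}. \<forall>x. norm (A t *v x) \<le> K * norm x"
    and KB: "\<forall>t\<in>{0..1}. \<forall>x. norm (B t *v x) \<le> K * norm x"
    and K0: "K \<ge> 0" and V0: "V 0 = 0" and V10: "V1 0 = 0"
  shows "\<forall>t\<in>{0..1}. V t = 0"
proof
  fix s assume s: "s \<in> {0..(1::real)}"
  define C where "C = 1 + 5 * K"
  define E where "E t = V t \<bullet> V t + V1 t \<bullet> V1 t" for t
  define E' where "E' t = 2 * (V t \<bullet> V1 t) + 2 * (V1 t \<bullet> V2 t)" for t
  define F where "F t = exp (- C * t) * E t" for t
  have dE: "(E has_derivative (\<lambda>h. h * E' t)) (at t within {0..1})" if t: "t \<in> {0..1}" for t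
  proof -
    have a: "(V has_derivative (\<lambda>h. h *\<^sub>R V1 t)) (at t within {0..1})"
      using D t by (simp add: has_vector_derivative_def)
    have b: "(V1 has_derivative (\<lambda>h. h *\<^sub>R V2 t)) (at t within {0..1})"
      using D t by (simp add: has_vector_derivative_def)
    have "(E has_derivative (\<lambda>h. (V t \<bullet> h *\<^sub>R V1 t + h *\<^sub>R V1 t \<bullet> V t) +
         (V1 t \<bullet> h *\<^sub>R V2 t + h *\<^sub>R V2 t \<bullet> V1 t))) (at t within {0..1})"
      unfolding E_def by (intro derivative_intros a b)
    moreover have "(\<lambda>h. (V t \<bullet> h *\<^sub>R V1 t + h *\<^sub>R V1 t \<bullet> V t) +
         (V1 t \<bullet> h *\<^sub>R V2 t + h *\<^sub>R V2 t \<bullet> V1 t)) = (\<lambda>h. h * E' t)"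
      by (auto simp: E'_def inner_commute algebra_simps)
    ultimately show ?thesis by simp
  qed
  have bnd: "E' t \<le> C * E t" if t: "t \<in> {0..1}" for t
  proof -
    define a where "a = norm (V t)"
    define b where "b = norm (V1 t)"
    have a0: "a \<ge> 0" "b \<ge> 0" by (auto simp: a_def b_def)
    have "V2 t = - (2 *\<^sub>R (A t *v V1 t)) - B t *v V t"
      using D t by (simp add: scal2 eq_neg_iff_add_eq_0 algebra_simps) 
    hence "norm (V2 t) \<le> 2 * norm (A t *v V1 t) + norm (B t *v V t)"
      using norm_triangle_ineq4[of "- (2 *\<^sub>R (A t *v V1 t))" "B t *v V t"] by simp
    also have "\<dots> \<le> 2 * (K * b) + K * a" using KA KB t by (simp add: a_def b_def add_mono)
    finally have n2: "norm (V2 t) \<le> 2 * K * b + K * a" by simp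
    have i1: "V t \<bullet> V1 t \<le> a * b" unfolding a_def b_def by (rule norm_cauchy_schwarz)
    have "V1 t \<bullet> V2 t \<le> b * norm (V2 t)" unfolding b_def by (rule norm_cauchy_schwarz)
    also have "\<dots> \<le> b * (2 * K * b + K * a)" using n2 a0 by (simp add: mult_left_mono)
    finally have i2: "V1 t \<bullet> V2 t \<le> b * (2 * K * b + K * a)" .
    have Ee: "E t = a^2 + b^2" by (simp add: E_def a_def b_def power2_norm_eq_inner)
    have q1: "2 * a * b \<le> a^2 + b^2" using sum_squares_bound[of a b] by (simp add: algebra_simps) 
    have q2: "K * (2 * a * b) \<le> K * (a^2 + b^2)" using q1 K0 by (rule mult_left_mono)
    have "E' t \<le> 2 * (a*b) + 2 * (b * (2 * K * b + K * a))" unfolding E'_def using i1 i2 by linarith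
    also have "\<dots> = 2*a*b + 4*(K*b^2) + K*(2*a*b)" by (simp add: algebra_simps power2_eq_square)
    also have "\<dots> \<le> a^2+b^2 + 5*(K*a^2) + 5*(K*b^2)"
      using q1 q2 mult_nonneg_nonneg[OF K0, of "a^2"] mult_nonneg_nonneg[OF K0, of "b^2"] by (simp add: distrib_left)
    also have "\<dots> = C * E t" unfolding Ee C_def by (simp add: algebra_simps)
    finally show ?thesis .
  qed
  have E0: "E 0 = 0" by (simp add: E_def V0 V10)
  have Enn: "E t \<ge> 0" for t by (simp add: E_def)
  have "F s - F 0 \<le> 0"
  proof -
    have dEf: "(E has_field_derivative E' t) (at t within {0..1})" if "t \<in> {0..1}" for t
    proof -
      have "(\<lambda>h. h * E' t) = (*) (E' t)" by (rule ext) (simp add: mult.commute)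
      thus ?thesis using dE[OF that] unfolding has_field_derivative_def by simp
    qed
    have "\<exists>x\<in>{0..s}. F s - F 0 = (\<lambda>h. (exp (- C * x) * (E' x - C * E x)) * h) (s - 0)"
    proof (rule mvt_very_simple)
      show "0 \<le> s" using s by simp
      fix x assume x: "0 \<le> x" "x \<le> s"
      hence x1: "x \<in> {0..1}" using s by auto
      have ex: "((\<lambda>t. - C * t) has_field_derivative (- C)) (at x within {0..1})"
        using DERIV_cmult[OF DERIV_ident, of "- C"] by simp
      have ex2: "((\<lambda>t. exp (- C * t)) has_field_derivative (exp (- C * x) * (- C))) (at x within {0..1})"
        by (rule DERIV_chain2[OF DERIV_exp ex])
      have "(F has_field_derivative (exp (- C * x) * (- C) * E x + E' x * exp (- C * x))) (at x within {0..1})"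
        unfolding F_def by (rule DERIV_mult[OF ex2 dEf[OF x1]])
      moreover have "exp (- C * x) * (- C) * E x + E' x * exp (- C * x) = exp (- C * x) * (E' x - C * E x)"
        by (simp add: algebra_simps)
      ultimately have "(F has_field_derivative (exp (- C * x) * (E' x - C * E x))) (at x within {0..1})"
        by simp
      hence "(F has_field_derivative (exp (- C * x) * (E' x - C * E x))) (at x within {0..s})"
        by (rule has_field_derivative_subset) (use s in auto)
      moreover have "(*) (exp (- C * x) * (E' x - C * E x)) = (\<lambda>h. (exp (- C * x) * (E' x - C * E x)) * h)"
        by (rule ext) simp
      ultimately show "(F has_derivative (\<lambda>h. (exp (- C * x) * (E' x - C * E x)) * h)) (at x within {0..s})"
        unfolding has_field_derivative_def by simp
    qed
    then obtain x where x: "x \<in> {0..s}" "F s - F 0 = (exp (- C * x) * (E' x - C * E x)) * s" by auto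
    have "E' x - C * E x \<le> 0" using bnd[of x] x s by auto
    hence "exp (- C * x) * (E' x - C * E x) \<le> 0" by (simp add: mult_nonneg_nonpos)
    thus ?thesis using x s by (simp add: mult_nonpos_nonneg)
  qed
  hence "E s \<le> 0" by (simp add: F_def E0 mult_le_0_iff)
  hence "V s \<bullet> V s + V1 s \<bullet> V1 s \<le> 0" by (simp add: E_def)
  moreover have "V1 s \<bullet> V1 s \<ge> 0" by simp
  ultimately have "V s \<bullet> V s \<le> 0" by linarith
  hence "V s \<bullet> V s = 0" using inner_ge_zero[of "V s"] by linarith
  thus "V s = 0" by simp
qed


interpretation FV: vector_space "\<lambda>(c::complex) (V::real \<Rightarrow> complex^'n) t. c *s V t"
  by unfold_locales (auto simp: fun_eq_iff vector_add_ldistrib vector_sadd_rdistrib)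

lemma cdim_FV: "cdim S = FV.dim S"
  unfolding cdim_def ..

definition D0 :: "(real \<Rightarrow> complex^'n) \<Rightarrow> complex^'n" where
  "D0 V = vector_derivative V (at 0 within {0..1})"
definition D1 :: "(real \<Rightarrow> complex^'n) \<Rightarrow> complex^'n" where
  "D1 V = vector_derivative V (at 1 within {0..1})"

lemma cmat_scale: "cmat M *v (c *s x) = c *s (cmat M *v x)"
  by (simp add: vec_eq_iff matrix_vector_mult_def sum_distrib_left algebra_simps)

lemma norm_cvec_scale: "norm (c *s (x::complex^'n)) = norm c * norm x"
  unfolding norm_vec_def by (simp add: L2_set_right_distrib norm_mult)

lemma js_D:
  assumes "jacobi_solution \<Gamma> R V"
  obtains V1 V2 where "\<forall>t\<in>{0..1}.
        (V has_vector_derivative V1 t) (at t within {0..1}) \<and>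
        (V1 has_vector_derivative V2 t) (at t within {0..1}) \<and>
        V2 t + (2::complex) *s (cmat (\<Gamma> t) *v V1 t)
          + cmat (vector_derivative \<Gamma> (at t) + \<Gamma> t ** \<Gamma> t - R t) *v V t = 0"
    "D0 V = V1 0" "D1 V = V1 1"
proof -
  obtain V1 V2 where h: "\<forall>t\<in>{0..1}.
        (V has_vector_derivative V1 t) (at t within {0..1}) \<and>
        (V1 has_vector_derivative V2 t) (at t within {0..1}) \<and>
        V2 t + (2::complex) *s (cmat (\<Gamma> t) *v V1 t)
          + cmat (vector_derivative \<Gamma> (at t) + \<Gamma> t ** \<Gamma> t - R t) *v V t = 0"
    using assms unfolding jacobi_solution_def by blast
  have "D0 V = V1 0" unfolding D0_def
    by (rule vector_derivative_within_closed_interval) (use h in auto)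
  moreover have "D1 V = V1 1" unfolding D1_def
    by (rule vector_derivative_within_closed_interval) (use h in auto)
  ultimately show ?thesis using h that by blast
qed

lemma js_zero: fixes \<Gamma> R :: "real \<Rightarrow> real^'n^'n" shows "jacobi_solution \<Gamma> R 0 \<and> D0 (0::real \<Rightarrow> complex^'n) = 0 \<and> D1 (0::real \<Rightarrow> complex^'n) = 0"
proof -
  have d: "((0::real \<Rightarrow> complex^'n) has_vector_derivative 0) (at t within {0..1})" for t
    by (simp add: zero_fun_def)
  have "jacobi_solution \<Gamma> R (0::real \<Rightarrow> complex^'n)"
    unfolding jacobi_solution_def
    by (rule conjI, simp, rule exI[of _ "\<lambda>_. 0"], rule exI[of _ "\<lambda>_. 0"]) (simp add: d zero_fun_def)
  moreover have "D0 (0::real \<Rightarrow> complex^'n) = 0" "D1 (0::real \<Rightarrow> complex^'n) = 0"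
    unfolding D0_def D1_def by (rule vector_derivative_within_closed_interval; simp add: d)+
  ultimately show ?thesis by simp
qed

lemma js_add:
  assumes "jacobi_solution \<Gamma> R V" "jacobi_solution \<Gamma> R W"
  shows "jacobi_solution \<Gamma> R (V + W) \<and> D0 (V + W) = D0 V + D0 W \<and> D1 (V + W) = D1 V + D1 W"
proof -
  obtain V1 V2 where v: "\<forall>t\<in>{0..1}.
        (V has_vector_derivative V1 t) (at t within {0..1}) \<and>
        (V1 has_vector_derivative V2 t) (at t within {0..1}) \<and>
        V2 t + (2::complex) *s (cmat (\<Gamma> t) *v V1 t)
          + cmat (vector_derivative \<Gamma> (at t) + \<Gamma> t ** \<Gamma> t - R t) *v V t = 0"
    "D0 V = V1 0" "D1 V = V1 1" by (rule js_D[OF assms(1)])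
  obtain W1 W2 where w: "\<forall>t\<in>{0..1}.
        (W has_vector_derivative W1 t) (at t within {0..1}) \<and>
        (W1 has_vector_derivative W2 t) (at t within {0..1}) \<and>
        W2 t + (2::complex) *s (cmat (\<Gamma> t) *v W1 t)
          + cmat (vector_derivative \<Gamma> (at t) + \<Gamma> t ** \<Gamma> t - R t) *v W t = 0"
    "D0 W = W1 0" "D1 W = W1 1" by (rule js_D[OF assms(2)])
  have vw: "V + W = (\<lambda>t. V t + W t)" by (simp add: fun_eq_iff)
  have d1: "((V + W) has_vector_derivative (V1 t + W1 t)) (at t within {0..1})" if "t \<in> {0..1}" for t
    unfolding vw using v w that by (auto intro!: has_vector_derivative_add)
  have d2: "((\<lambda>t. V1 t + W1 t) has_vector_derivative (V2 t + W2 t)) (at t within {0..1})" if "t \<in> {0..1}" for t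
    using v w that by (auto intro!: has_vector_derivative_add)
  have eq: "(V2 t + W2 t) + (2::complex) *s (cmat (\<Gamma> t) *v (V1 t + W1 t))
          + cmat (vector_derivative \<Gamma> (at t) + \<Gamma> t ** \<Gamma> t - R t) *v (V + W) t = 0"
    if "t \<in> {0..1}" for t
  proof -
    have "(V2 t + W2 t) + (2::complex) *s (cmat (\<Gamma> t) *v (V1 t + W1 t))
          + cmat (vector_derivative \<Gamma> (at t) + \<Gamma> t ** \<Gamma> t - R t) *v (V + W) t =
       (V2 t + (2::complex) *s (cmat (\<Gamma> t) *v V1 t)
          + cmat (vector_derivative \<Gamma> (at t) + \<Gamma> t ** \<Gamma> t - R t) *v V t) +
       (W2 t + (2::complex) *s (cmat (\<Gamma> t) *v W1 t)
          + cmat (vector_derivative \<Gamma> (at t) + \<Gamma> t ** \<Gamma> t - R t) *v W t)"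
      by (simp add: matrix_vector_right_distrib vector_add_ldistrib add_ac)
    also have "\<dots> = 0" using v w that by simp
    finally show ?thesis .
  qed
  have out: "\<forall>t. t \<notin> {0..1} \<longrightarrow> (V + W) t = 0"
    using assms unfolding jacobi_solution_def by simp
  have "jacobi_solution \<Gamma> R (V + W)"
    unfolding jacobi_solution_def
    apply (rule conjI, rule out)
    apply (rule exI[where x="\<lambda>t. V1 t + W1 t"], rule exI[where x="\<lambda>t. V2 t + W2 t"])
    using d1 d2 eq by simp
  moreover have "D0 (V + W) = D0 V + D0 W" unfolding v(2) w(2) unfolding D0_def
    by (rule vector_derivative_within_closed_interval) (auto intro: d1)
  moreover have "D1 (V + W) = D1 V + D1 W" unfolding v(3) w(3) unfolding D1_def
    by (rule vector_derivative_within_closed_interval) (auto intro: d1)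
  ultimately show ?thesis by simp
qed

lemma js_scale:
  assumes "jacobi_solution \<Gamma> R V"
  shows "jacobi_solution \<Gamma> R (\<lambda>t. c *s V t) \<and> D0 (\<lambda>t. c *s V t) = c *s D0 V \<and> D1 (\<lambda>t. c *s V t) = c *s D1 V"
proof -
  obtain V1 V2 where v: "\<forall>t\<in>{0..1}.
        (V has_vector_derivative V1 t) (at t within {0..1}) \<and>
        (V1 has_vector_derivative V2 t) (at t within {0..1}) \<and>
        V2 t + (2::complex) *s (cmat (\<Gamma> t) *v V1 t)
          + cmat (vector_derivative \<Gamma> (at t) + \<Gamma> t ** \<Gamma> t - R t) *v V t = 0"
    "D0 V = V1 0" "D1 V = V1 1" by (rule js_D[OF assms(1)])
  have bl: "bounded_linear (\<lambda>x::complex^'n. c *s x)"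
    by unfold_locales (auto simp: vector_add_ldistrib vec_eq_iff scaleR_conv_of_real norm_cvec_scale
       intro!: exI[of _ "norm c"])
  have d1: "((\<lambda>t. c *s V t) has_vector_derivative (c *s V1 t)) (at t within {0..1})" if "t \<in> {0..1}" for t
    using bounded_linear.has_vector_derivative[OF bl, of V "V1 t"] v that by auto
  have d2: "((\<lambda>t. c *s V1 t) has_vector_derivative (c *s V2 t)) (at t within {0..1})" if "t \<in> {0..1}" for t
    using bounded_linear.has_vector_derivative[OF bl, of V1 "V2 t"] v that by auto
  have eq: "c *s V2 t + (2::complex) *s (cmat (\<Gamma> t) *v (c *s V1 t))
          + cmat (vector_derivative \<Gamma> (at t) + \<Gamma> t ** \<Gamma> t - R t) *v (c *s V t) = 0"
    if "t \<in> {0..1}" for t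
  proof -
    have "c *s V2 t + (2::complex) *s (cmat (\<Gamma> t) *v (c *s V1 t))
          + cmat (vector_derivative \<Gamma> (at t) + \<Gamma> t ** \<Gamma> t - R t) *v (c *s V t) =
       c *s (V2 t + (2::complex) *s (cmat (\<Gamma> t) *v V1 t)
          + cmat (vector_derivative \<Gamma> (at t) + \<Gamma> t ** \<Gamma> t - R t) *v V t)"
      by (simp add: cmat_scale vector_add_ldistrib vector_smult_assoc mult.commute)
    also have "\<dots> = 0" using v that by simp
    finally show ?thesis .
  qed
  have out: "\<forall>t. t \<notin> {0..1} \<longrightarrow> c *s V t = 0"
    using assms unfolding jacobi_solution_def by simp
  have "jacobi_solution \<Gamma> R (\<lambda>t. c *s V t)"
    unfolding jacobi_solution_def
    apply (rule conjI, rule out)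
    apply (rule exI[where x="\<lambda>t. c *s V1 t"], rule exI[where x="\<lambda>t. c *s V2 t"])
    using d1 d2 eq by simp
  moreover have "D0 (\<lambda>t. c *s V t) = c *s D0 V" unfolding v(2) unfolding D0_def
    by (rule vector_derivative_within_closed_interval) (auto intro: d1)
  moreover have "D1 (\<lambda>t. c *s V t) = c *s D1 V" unfolding v(3) unfolding D1_def
    by (rule vector_derivative_within_closed_interval) (auto intro: d1)
  ultimately show ?thesis by simp
qed


lemma cmat_bound:
  fixes M :: "real^'n^'n" and x :: "complex^'n"
  shows "norm (cmat M *v x) \<le> (real CARD('n) * real CARD('n) * norm M) * norm x"
proof -
  have c: "norm ((cmat M *v x) $ i) \<le> real CARD('n) * norm M * norm x" for i
  proof -
    have "norm ((cmat M *v x) $ i) = norm (\<Sum>j\<in>UNIV. complex_of_real (M $ i $ j) * x $ j)"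
      by (simp add: matrix_vector_mult_def cmat_def)
    also have "\<dots> \<le> (\<Sum>j\<in>UNIV. norm (complex_of_real (M $ i $ j) * x $ j))" by (rule norm_sum)
    also have "\<dots> \<le> (\<Sum>j\<in>(UNIV::'n set). norm M * norm x)"
    proof (rule sum_mono)
      fix j
      have n1: "\<bar>M $ i $ j\<bar> \<le> norm (M $ i)" by (rule component_le_norm_cart)
      have n2: "norm (M $ i) \<le> norm M" by (rule Finite_Cartesian_Product.norm_nth_le)
      have "\<bar>M $ i $ j\<bar> \<le> norm M" using n1 n2 by linarith
      moreover have "norm (x $ j) \<le> norm x" by (rule Finite_Cartesian_Product.norm_nth_le)
      ultimately show "norm (complex_of_real (M $ i $ j) * x $ j) \<le> norm M * norm x"
        by (simp add: norm_mult mult_mono)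
    qed
    also have "\<dots> = real CARD('n) * norm M * norm x" by simp
    finally show ?thesis .
  qed
  have "norm (cmat M *v x) \<le> (\<Sum>i\<in>UNIV. norm ((cmat M *v x) $ i))"
    unfolding norm_vec_def by (rule L2_set_le_sum) simp
  also have "\<dots> \<le> (\<Sum>i\<in>(UNIV::'n set). real CARD('n) * norm M * norm x)" by (rule sum_mono) (rule c)
  also have "\<dots> = (real CARD('n) * real CARD('n) * norm M) * norm x" by simp
  finally show ?thesis .
qed

lemma js_sum:
  fixes \<Gamma> R :: "real \<Rightarrow> real^'n^'n" and f :: "'a \<Rightarrow> real \<Rightarrow> complex^'n"
  assumes "finite Z" "\<forall>z\<in>Z. jacobi_solution \<Gamma> R (f z)"
  shows "jacobi_solution \<Gamma> R (sum f Z) \<and> D0 (sum f Z) = (\<Sum>z\<in>Z. D0 (f z)) \<and> D1 (sum f Z) = (\<Sum>z\<in>Z. D1 (f z))"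
  using assms
proof (induction Z rule: finite_induct)
  case empty
  then show ?case using js_zero[of \<Gamma> R] by (simp only: sum.empty)
next
  case (insert a Z)
  have h: "\<forall>z\<in>Z. jacobi_solution \<Gamma> R (f z)" "jacobi_solution \<Gamma> R (f a)" using insert.prems by auto
  have ih: "jacobi_solution \<Gamma> R (sum f Z) \<and> D0 (sum f Z) = (\<Sum>z\<in>Z. D0 (f z)) \<and> D1 (sum f Z) = (\<Sum>z\<in>Z. D1 (f z))"
    using insert.IH[OF h(1)] .
  have e: "sum f (insert a Z) = f a + sum f Z" by (rule sum.insert[OF insert(1,2)])
  have e0: "(\<Sum>z\<in>insert a Z. D0 (f z)) = D0 (f a) + (\<Sum>z\<in>Z. D0 (f z))" by (rule sum.insert[OF insert(1,2)])
  have e1: "(\<Sum>z\<in>insert a Z. D1 (f z)) = D1 (f a) + (\<Sum>z\<in>Z. D1 (f z))" by (rule sum.insert[OF insert(1,2)])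
  show ?case unfolding e e0 e1 using js_add[OF h(2) conjunct1[OF ih]] ih by metis
qed

context
  fixes \<Gamma> R :: "real \<Rightarrow> real^'n^'n"
  assumes \<Gamma>d: "\<forall>t. \<Gamma> differentiable (at t)"
    and \<Gamma>c: "continuous_on UNIV (\<lambda>t. vector_derivative \<Gamma> (at t))"
    and Rc: "continuous_on UNIV R"
begin

lemma uniq:
  assumes js: "jacobi_solution \<Gamma> R V" and V0: "V 0 = 0" and D: "D0 V = 0"
  shows "V = 0"
proof -
  obtain V1 V2 where v: "\<forall>t\<in>{0..1}.
        (V has_vector_derivative V1 t) (at t within {0..1}) \<and>
        (V1 has_vector_derivative V2 t) (at t within {0..1}) \<and>
        V2 t + (2::complex) *s (cmat (\<Gamma> t) *v V1 t)
          + cmat (vector_derivative \<Gamma> (at t) + \<Gamma> t ** \<Gamma> t - R t) *v V t = 0"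
    "D0 V = V1 0" "D1 V = V1 1" by (rule js_D[OF js])
  define Q where "Q t = vector_derivative \<Gamma> (at t) + \<Gamma> t ** \<Gamma> t - R t" for t
  have gc: "continuous_on UNIV \<Gamma>"
    using \<Gamma>d by (simp add: continuous_at_imp_continuous_on differentiable_imp_continuous_within)
  have qc: "continuous_on UNIV Q"
    unfolding Q_def matrix_matrix_mult_def
    by (intro continuous_intros \<Gamma>c Rc gc)
  have "bounded (\<Gamma> ` {0..1})"
    by (rule compact_imp_bounded, rule compact_continuous_image) (use gc continuous_on_subset in auto)
  then obtain B1 where B1: "\<forall>t\<in>{0..1}. norm (\<Gamma> t) \<le> B1" unfolding bounded_iff by auto
  have "bounded (Q ` {0..1})"
    by (rule compact_imp_bounded, rule compact_continuous_image) (use qc continuous_on_subset in auto)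
  then obtain B2 where B2: "\<forall>t\<in>{0..1}. norm (Q t) \<le> B2" unfolding bounded_iff by auto
  define c where "c = real CARD('n) * real CARD('n)"
  have c0: "c \<ge> 0" by (simp add: c_def)
  define K where "K = c * (\<bar>B1\<bar> + \<bar>B2\<bar>)"
  have K0: "K \<ge> 0" by (simp add: K_def c0)
  have KA: "\<forall>t\<in>{0..1}. \<forall>x. norm (cmat (\<Gamma> t) *v x) \<le> K * norm x"
  proof (intro ballI allI)
    fix t x assume t: "t \<in> {0..(1::real)}"
    have "norm (cmat (\<Gamma> t) *v x) \<le> (c * norm (\<Gamma> t)) * norm x" using cmat_bound c_def by metis
    also have "\<dots> \<le> K * norm x"
    proof -
      have "norm (\<Gamma> t) \<le> B1" using B1 t by auto
      hence "norm (\<Gamma> t) \<le> \<bar>B1\<bar> + \<bar>B2\<bar>" by linarith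
      thus ?thesis unfolding K_def using c0 by (intro mult_right_mono mult_left_mono) auto
    qed
    finally show "norm (cmat (\<Gamma> t) *v x) \<le> K * norm x" .
  qed
  have KB: "\<forall>t\<in>{0..1}. \<forall>x. norm (cmat (Q t) *v x) \<le> K * norm x"
  proof (intro ballI allI)
    fix t x assume t: "t \<in> {0..(1::real)}"
    have "norm (cmat (Q t) *v x) \<le> (c * norm (Q t)) * norm x" using cmat_bound c_def by metis
    also have "\<dots> \<le> K * norm x"
    proof -
      have "norm (Q t) \<le> B2" using B2 t by auto
      hence "norm (Q t) \<le> \<bar>B1\<bar> + \<bar>B2\<bar>" by linarith
      thus ?thesis unfolding K_def using c0 by (intro mult_right_mono mult_left_mono) auto
    qed
    finally show "norm (cmat (Q t) *v x) \<le> K * norm x" .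
  qed
  have "\<forall>t\<in>{0..1}. V t = 0"
    apply (rule ode_unique[where A="\<lambda>t. cmat (\<Gamma> t)" and B="\<lambda>t. cmat (Q t)" and ?V1.0=V1 and ?V2.0=V2 and K=K])
    using v D KA KB K0 V0 by (auto simp: Q_def)
  moreover have "\<forall>t. t \<notin> {0..1} \<longrightarrow> V t = 0" using js unfolding jacobi_solution_def by simp
  ultimately show ?thesis by (auto simp: fun_eq_iff)
qed


lemma sum_fun_app: "sum (f :: 'a \<Rightarrow> real \<Rightarrow> complex^'n) Z t = (\<Sum>z\<in>Z. f z t)"
  by (induction Z rule: infinite_finite_induct) auto

lemma J1_alt: "J1 \<Gamma> R z = {V. jacobi_solution \<Gamma> R V \<and> V 0 = 0 \<and> V 1 = 0 \<and> D1 V = z *s D0 V}"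
  unfolding J1_def D0_def D1_def ..

lemma J1_subspace: "FV.subspace (J1 \<Gamma> R z)"
  unfolding FV.subspace_def
proof (intro conjI ballI allI)
  show "0 \<in> J1 \<Gamma> R z" unfolding J1_alt using js_zero[of \<Gamma> R] by simp
next
  fix x y assume x: "x \<in> J1 \<Gamma> R z" and y: "y \<in> J1 \<Gamma> R z"
  then show "x + y \<in> J1 \<Gamma> R z" unfolding J1_alt using js_add[of \<Gamma> R x y]
    by (simp add: vector_add_ldistrib)
next
  fix c :: complex and x assume x: "x \<in> J1 \<Gamma> R z"
  then show "(\<lambda>t. c *s x t) \<in> J1 \<Gamma> R z" unfolding J1_alt using js_scale[of \<Gamma> R x c]
    by (simp add: vector_smult_assoc mult.commute)
qed

lemma J1_disj:
  assumes "z \<noteq> w" "V \<in> J1 \<Gamma> R z" "V \<in> J1 \<Gamma> R w"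
  shows "V = 0"
proof -
  have "z *s D0 V = w *s D0 V" using assms unfolding J1_alt by auto
  hence "(z - w) *s D0 V = 0" by (simp add: vec.scale_left_diff_distrib)
  hence "D0 V = 0" using assms(1) by simp
  thus ?thesis using uniq assms(2) unfolding J1_alt by auto
qed

lemma eig:
  assumes "finite Z"
  shows "(\<forall>z\<in>Z. f z \<in> J1 \<Gamma> R z) \<Longrightarrow> sum f Z = 0 \<Longrightarrow> \<forall>z\<in>Z. f z = 0"
  using assms
proof (induction Z arbitrary: f rule: finite_induct)
  case empty thus ?case by simp
next
  case (insert a Z)
  have fJ: "\<forall>z\<in>Z. f z \<in> J1 \<Gamma> R z" "f a \<in> J1 \<Gamma> R a" using insert.prems by auto
  have js: "\<forall>z\<in>Z. jacobi_solution \<Gamma> R (f z)" using fJ unfolding J1_alt by auto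
  have Dz: "\<forall>z\<in>Z. D1 (f z) = z *s D0 (f z)" using fJ unfolding J1_alt by auto
  have ja: "jacobi_solution \<Gamma> R (f a)" "D1 (f a) = a *s D0 (f a)" using fJ unfolding J1_alt by auto
  have e: "sum f (insert a Z) = f a + sum f Z" by (rule sum.insert[OF insert(1,2)])
  have s0: "f a + sum f Z = 0" using insert.prems(2) unfolding e .
  have S: "jacobi_solution \<Gamma> R (sum f Z) \<and> D0 (sum f Z) = (\<Sum>z\<in>Z. D0 (f z)) \<and> D1 (sum f Z) = (\<Sum>z\<in>Z. D1 (f z))"
    using js_sum[OF insert(1) js] .
  have A: "D0 (f a + sum f Z) = D0 (f a) + D0 (sum f Z) \<and> D1 (f a + sum f Z) = D1 (f a) + D1 (sum f Z)"
    using js_add[OF ja(1) conjunct1[OF S]] by blast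
  have z0: "D0 (0::real \<Rightarrow> complex^'n) = 0" "D1 (0::real \<Rightarrow> complex^'n) = 0" using js_zero[of \<Gamma> R] by auto
  have A0: "D0 (f a) + D0 (sum f Z) = 0" using conjunct1[OF A] unfolding s0 z0 by simp
  have A1: "D1 (f a) + D1 (sum f Z) = 0" using conjunct2[OF A] unfolding s0 z0 by simp
  have e0: "D0 (f a) + (\<Sum>z\<in>Z. D0 (f z)) = 0" using A0 S by simp
  have "(\<Sum>z\<in>Z. D1 (f z)) = (\<Sum>z\<in>Z. z *s D0 (f z))" using Dz by (intro sum.cong) auto
  hence e1: "a *s D0 (f a) + (\<Sum>z\<in>Z. z *s D0 (f z)) = 0" using A1 S ja(2) by simp
  have y0: "(\<Sum>z\<in>Z. D0 (f z)) = - D0 (f a)" using e0 by (metis add.commute eq_neg_iff_add_eq_0)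
  have y1: "(\<Sum>z\<in>Z. z *s D0 (f z)) = - (a *s D0 (f a))" using e1 by (metis add.commute eq_neg_iff_add_eq_0)
  define g where "g z = (\<lambda>t. (z - a) *s f z t)" for z
  have gJ: "\<forall>z\<in>Z. g z \<in> J1 \<Gamma> R z"
  proof
    fix z assume "z \<in> Z"
    thus "g z \<in> J1 \<Gamma> R z" unfolding g_def using fJ(1)
      by (intro FV.subspace_scale[OF J1_subspace]) auto
  qed
  have gjs: "\<forall>z\<in>Z. jacobi_solution \<Gamma> R (g z) \<and> D0 (g z) = (z - a) *s D0 (f z)"
  proof
    fix z assume "z \<in> Z"
    thus "jacobi_solution \<Gamma> R (g z) \<and> D0 (g z) = (z - a) *s D0 (f z)"
      unfolding g_def using js js_scale[of \<Gamma> R "f z" "z - a"] by simp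
  qed
  have G: "jacobi_solution \<Gamma> R (sum g Z) \<and> D0 (sum g Z) = (\<Sum>z\<in>Z. D0 (g z))"
  proof -
    have "\<forall>z\<in>Z. jacobi_solution \<Gamma> R (g z)" using gjs by simp
    from js_sum[OF insert(1) this] show ?thesis by simp
  qed
  have "(\<Sum>z\<in>Z. D0 (g z)) = (\<Sum>z\<in>Z. z *s D0 (f z) - a *s D0 (f z))"
    using gjs by (intro sum.cong) (auto simp: vec.scale_left_diff_distrib)
  also have "\<dots> = (\<Sum>z\<in>Z. z *s D0 (f z)) - a *s (\<Sum>z\<in>Z. D0 (f z))"
    by (simp add: sum_subtractf vec.scale_sum_right)
  also have "\<dots> = - (a *s D0 (f a)) - a *s (- D0 (f a))"
    unfolding y0 y1 ..
  also have "\<dots> = 0" by (simp add: vec.scale_minus_right)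
  finally have gD: "D0 (sum g Z) = 0" using G by simp
  have g0: "sum g Z 0 = 0" unfolding sum_fun_app g_def using fJ unfolding J1_alt by auto
  have "sum g Z = 0" by (rule uniq) (use G g0 gD in auto)
  hence gz: "\<forall>z\<in>Z. g z = 0" using insert.IH[of g] gJ by blast
  have fz: "\<forall>z\<in>Z. f z = 0"
  proof
    fix z assume zZ: "z \<in> Z"
    have "g z t = 0" for t using gz zZ by simp
    hence "(z - a) *s f z t = 0" for t unfolding g_def .
    moreover have "z - a \<noteq> 0" using zZ insert(2) by auto
    ultimately show "f z = 0" by (auto simp: fun_eq_iff)
  qed
  hence "sum f Z = 0" by simp
  hence "f a = 0" using s0 by simp
  thus ?case using fz by auto
qed

lemma img:
  assumes BS: "\<forall>V\<in>B. jacobi_solution \<Gamma> R V \<and> V 0 = 0" and ind: "FV.independent B"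
  shows "inj_on D0 B \<and> vec.independent (D0 ` B)"
proof
  show inj: "inj_on D0 B"
  proof (rule inj_onI)
    fix v w assume v: "v \<in> B" and w: "w \<in> B" and eq: "D0 v = D0 w"
    have jw: "jacobi_solution \<Gamma> R (\<lambda>t. (-1) *s w t) \<and> D0 (\<lambda>t. (-1) *s w t) = (-1) *s D0 w"
      using js_scale BS w by blast
    have W: "jacobi_solution \<Gamma> R (v + (\<lambda>t. (-1) *s w t)) \<and> D0 (v + (\<lambda>t. (-1) *s w t)) = D0 v + (-1) *s D0 w"
      using js_add[of \<Gamma> R v "\<lambda>t. (-1) *s w t"] jw BS v by auto
    have "D0 v + (-1) *s D0 w = 0" using eq by (simp add: vec_eq_iff)
    moreover have "v 0 = 0" "w 0 = 0" using BS v w by auto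
    hence "(v + (\<lambda>t. (-1) *s w t)) 0 = 0" by simp
    ultimately have "v + (\<lambda>t. (-1) *s w t) = 0" using uniq W by metis
    hence "\<forall>t. v t + (-1) *s w t = 0" by (metis plus_fun_apply zero_fun_apply)
    thus "v = w" by (auto simp: fun_eq_iff vec_eq_iff)
  qed
  show "vec.independent (D0 ` B)"
  proof
    assume "vec.dependent (D0 ` B)"
    then obtain t u where t: "finite t" "t \<subseteq> D0 ` B" "(\<Sum>y\<in>t. u y *s y) = 0" "\<exists>y\<in>t. u y \<noteq> 0"
      unfolding vec.dependent_explicit by blast
    define t' where "t' = {v\<in>B. D0 v \<in> t}"
    have tt: "D0 ` t' = t" using t(2) unfolding t'_def by auto
    have it: "inj_on D0 t'" using inj unfolding t'_def by (rule inj_on_subset) auto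
    have ft: "finite t'" using t(1) tt it finite_image_iff by metis
    have s: "(\<Sum>v\<in>t'. u (D0 v) *s D0 v) = 0"
      using t(3) unfolding tt[symmetric] sum.reindex[OF it] by simp
    define f where "f v = (\<lambda>s. u (D0 v) *s v s)" for v
    have fj: "\<forall>v\<in>t'. jacobi_solution \<Gamma> R (f v) \<and> D0 (f v) = u (D0 v) *s D0 v"
      unfolding f_def using js_scale BS t'_def by blast
    have W: "jacobi_solution \<Gamma> R (sum f t') \<and> D0 (sum f t') = (\<Sum>v\<in>t'. D0 (f v))"
      using js_sum[OF ft] fj by blast
    have "D0 (sum f t') = 0" using W fj s by (metis (no_types, lifting) sum.cong)
    moreover have "sum f t' 0 = 0" unfolding sum_fun_app f_def by (intro sum.neutral) (use BS t'_def in auto)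
    ultimately have "sum f t' = 0" using uniq W by blast
    moreover obtain y where "y \<in> t" "u y \<noteq> 0" using t(4) by blast
    then obtain v where "v \<in> t'" "u (D0 v) \<noteq> 0" using tt by auto
    ultimately have "FV.dependent B"
      unfolding FV.dependent_explicit
      by (intro exI[of _ t'] exI[of _ "\<lambda>v. u (D0 v)"]) (use ft in \<open>auto simp: t'_def f_def\<close>)
    thus False using ind by simp
  qed
qed

lemma count:
  assumes "finite Z"
  shows "(\<Sum>z\<in>Z. cdim (J1 \<Gamma> R z)) \<le> CARD('n)"
proof -
  have "\<forall>z. \<exists>Bz. Bz \<subseteq> J1 \<Gamma> R z \<and> FV.independent Bz \<and> card Bz = cdim (J1 \<Gamma> R z)"
    using FV.basis_exists cdim_FV by metis
  then obtain B where B: "\<And>z. B z \<subseteq> J1 \<Gamma> R z" "\<And>z. FV.independent (B z)" "\<And>z. card (B z) = cdim (J1 \<Gamma> R z)"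
    by metis
  have BS: "\<forall>V\<in>B z. jacobi_solution \<Gamma> R V \<and> V 0 = 0" for z :: complex using B(1) unfolding J1_alt by auto
  have finB: "finite (B z)" for z :: complex
  proof -
    have "inj_on D0 (B z) \<and> vec.independent (D0 ` B z)" using img[OF BS B(2)] .
    thus ?thesis using vec.finiteI_independent finite_image_iff by metis
  qed
  have disj: "\<forall>z\<in>Z. \<forall>w\<in>Z. z \<noteq> w \<longrightarrow> B z \<inter> B w = {}"
  proof (intro ballI impI)
    fix z w :: complex assume "z \<noteq> w"
    { fix V assume "V \<in> B z" "V \<in> B w"
      hence "V = 0" using J1_disj[OF \<open>z \<noteq> w\<close>] B(1) by blast
      hence False using \<open>V \<in> B z\<close> B(2)[of z] FV.dependent_zero by blast }
    thus "B z \<inter> B w = {}" by blast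
  qed
  define U where "U = (\<Union>z\<in>Z. B z)"
  have US: "\<forall>V\<in>U. jacobi_solution \<Gamma> R V \<and> V 0 = 0" unfolding U_def using BS by blast
  have Uind: "FV.independent U"
  proof
    assume "FV.dependent U"
    then obtain t u where t: "finite t" "t \<subseteq> U" "(\<Sum>v\<in>t. (\<lambda>s. u v *s v s)) = 0" "\<exists>v\<in>t. u v \<noteq> 0"
      unfolding FV.dependent_explicit by blast
    define f where "f z = (\<Sum>v\<in>t \<inter> B z. (\<lambda>s. u v *s v s))" for z
    have fJ: "\<forall>z\<in>Z. f z \<in> J1 \<Gamma> R z"
      unfolding f_def using B(1)
      by (auto intro!: FV.subspace_sum[OF J1_subspace] FV.subspace_scale[OF J1_subspace])
    have tU: "t = (\<Union>z\<in>Z. t \<inter> B z)" using t(2) unfolding U_def by auto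
    have "sum f Z = (\<Sum>v\<in>t. (\<lambda>s. u v *s v s))"
      unfolding f_def
      by (subst tU, rule sum.UNION_disjoint[symmetric]) (use assms t(1) disj in auto)
    hence "sum f Z = 0" using t(3) by simp
    hence f0: "\<forall>z\<in>Z. f z = 0" using eig[OF assms] fJ by blast
    obtain y where y: "y \<in> t" "u y \<noteq> 0" using t(4) by blast
    then obtain z where z: "z \<in> Z" "y \<in> B z" using t(2) unfolding U_def by auto
    have "FV.dependent (B z)"
      unfolding FV.dependent_explicit
      apply (rule exI[of _ "t \<inter> B z"], rule exI[of _ u])
      using f0 z y t(1) unfolding f_def by auto
    thus False using B(2) by blast
  qed
  have "(\<Sum>z\<in>Z. cdim (J1 \<Gamma> R z)) = (\<Sum>z\<in>Z. card (B z))" using B(3) by simp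
  also have "\<dots> = card U" unfolding U_def by (rule card_UN_disjoint[symmetric]) (use assms finB disj in auto)
  also have "\<dots> = card (D0 ` U)" using img[OF US Uind] card_image by metis
  also have "\<dots> \<le> vec.dim (UNIV :: (complex^'n) set)"
    using img[OF US Uind] vec.independent_card_le_dim by blast
  also have "\<dots> = CARD('n)" by (simp add: card_cart_basis)
  finally show ?thesis .
qed

end

theorem lemma6p2:
  fixes \<Gamma> R :: "real \<Rightarrow> real^'n^'n" and \<epsilon> :: "real^'n" and N :: nat
  assumes eps: "\<forall>i. \<epsilon> $ i = 1 \<or> \<epsilon> $ i = -1"
    and \<Gamma>_diff: "\<forall>t. \<Gamma> differentiable (at t)"
    and \<Gamma>_C1: "continuous_on UNIV (\<lambda>t. vector_derivative \<Gamma> (at t))"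
    and R_cont: "continuous_on UNIV R"
    and \<Gamma>_per: "\<forall>t. \<Gamma> (t + 1) = \<Gamma> t"
    and R_per: "\<forall>t. R (t + 1) = R t"
    and \<Gamma>_skew: "\<forall>t. transpose (\<Gamma> t) ** sig_mat \<epsilon> = - (sig_mat \<epsilon> ** \<Gamma> t)"
    and R_sym: "\<forall>t. transpose (R t) ** sig_mat \<epsilon> = sig_mat \<epsilon> ** R t"
    and N: "N \<ge> 1"
  shows "0 \<le> (\<Sum>k<N. cdim (J1 \<Gamma> R (exp (2 * pi * \<i> / of_nat N) ^ k)))
       \<and> (\<Sum>k<N. cdim (J1 \<Gamma> R (exp (2 * pi * \<i> / of_nat N) ^ k))) \<le> 2 * CARD('n)"
proof -
  define r where "r k = exp (2 * of_real pi * \<i> * of_nat k / of_nat N)" for k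
  have rk: "exp (2 * complex_of_real pi * \<i> / of_nat N) ^ k = r k" for k
    unfolding r_def exp_of_nat_mult[symmetric] by (simp add: field_simps)
  have inj: "inj_on r {..<N}" unfolding r_def using bij_betw_roots_unity[of N] by (simp add: bij_betw_def)
  have "(\<Sum>k<N. cdim (J1 \<Gamma> R (exp (2 * pi * \<i> / of_nat N) ^ k))) = (\<Sum>k<N. cdim (J1 \<Gamma> R (r k)))"
    by (simp add: rk)
  also have "\<dots> = (\<Sum>z\<in>r ` {..<N}. cdim (J1 \<Gamma> R z))" by (simp add: sum.reindex[OF inj])
  also have "\<dots> \<le> CARD('n)" by (rule count[OF \<Gamma>_diff \<Gamma>_C1 R_cont]) simp
  finally show ?thesis by simp
qed

end
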